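(* Let $(X,d)$ be a compact metric space with $\operatorname{diam}(X,d)=1/2$, let $a\ge\lambda\ge6$ and $L>1$, let $\theta\in\mathcal J(X,d)$, and let $\mu$ be a $q$-homogeneous measure on $(X,\theta)$. Let $\mathcal S$ be a hyperbolic filling with parameters $a,\lambda$. For $v\in\mathcal S$ and $k\in\mathbb N$ define $\rho_v:\mathcal S_{\pi_2(v)+k}\to[0,\infty)$ by $\rho_v(w)=\big(\mu(B_w)/\mu(B_v)\big)^{1/q}$ if $B_w\cap B_d(\pi_1(v),(L+1)a^{-\pi_2(v)})\ne\emptyset$ and $w\in\gamma$ for some $\gamma\in\Gamma_{k,L}(v)$, and $\rho_v(w)=0$ otherwise. Then there exist $c>0$ and $k_0\in\mathbb N$, depending only on $d,\theta,\mu,a,L$, such that for all $k\ge k_0$, all $v\in\mathcal S$ and all $\gamma\in\Gamma_{k,L}(v)$, $\sum_{w\in\gamma}\rho_v(w)\ge c$.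
   Context: Hyperbolic filling: $X_0\subset X_1\subset\cdots$ increasing, each $X_n$ a maximal $a^{-n}$-separated subset of $X$; $\mathcal S_n=\{(x,n):x\in X_n\}$, $\mathcal S=\bigcup_n\mathcal S_n$, $\pi_1(x,n)=x$, $\pi_2(x,n)=n$, $B_v=B_d(\pi_1(v),a^{-\pi_2(v)})$ (open $d$-ball). $G_n$ is the graph on $\mathcal S_n$ in which distinct $v,w$ are adjacent iff $B(\pi_1(v),\lambda a^{-n})\cap B(\pi_1(w),\lambda a^{-n})\neq\emptyset$. $\Gamma_{k,L}(v)$ is the set of paths $(v_1,\dots,v_n)$ in $G_{\pi_2(v)+k}$ (consecutive vertices adjacent) with $\pi_1(v_1)\in B_v$ and $\pi_1(v_n)\notin B_d(\pi_1(v),La^{-\pi_2(v)})$. The sum $\sum_{w\in\gamma}$ runs over the entries of $\gamma$. $\mathcal J(X,d)$: metrics $\theta$ on $X$ such that $\theta(x,a)/\theta(x,b)\le\eta(d(x,a)/d(x,b))$ for all $x,a,b$, $x\ne b$, for some homeomorphism $\eta:[0,\infty)\to[0,\infty)$. A nonzero Borel measure $\mu$ is $q$-homogeneous on $(X,\theta)$ if there is $C$ with $\mu(B_\theta(x,R))\le C(R/r)^q\mu(B_\theta(x,r))$ for all $x\in X$, $0<r\le R$. *)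

theory Defs
  imports "HOL-Analysis.Analysis" "HOL-Probability.Probability"
begin

definition mdiam :: "'a set \<Rightarrow> ('a \<Rightarrow> 'a \<Rightarrow> real) \<Rightarrow> real" where
  "mdiam X d = Sup {d x y | x y. x \<in> X \<and> y \<in> X}"

definition in_J :: "'a set \<Rightarrow> ('a \<Rightarrow> 'a \<Rightarrow> real) \<Rightarrow> ('a \<Rightarrow> 'a \<Rightarrow> real) \<Rightarrow> bool" where
  "in_J X d \<theta> \<longleftrightarrow> Metric_space X \<theta> \<and>
     (\<exists>\<eta> \<eta>'. homeomorphism {0::real..} {0..} \<eta> \<eta>' \<and>
        (\<forall>x\<in>X. \<forall>a\<in>X. \<forall>b\<in>X. x \<noteq> b \<longrightarrow> \<theta> x a / \<theta> x b \<le> \<eta> (d x a / d x b)))"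

definition metric_borel_sets :: "'a set \<Rightarrow> ('a \<Rightarrow> 'a \<Rightarrow> real) \<Rightarrow> 'a set set" where
  "metric_borel_sets X \<theta> = sigma_sets X {U. openin (Metric_space.mtopology X \<theta>) U}"

definition q_homogeneous :: "'a set \<Rightarrow> ('a \<Rightarrow> 'a \<Rightarrow> real) \<Rightarrow> 'a measure \<Rightarrow> real \<Rightarrow> bool" where
  "q_homogeneous X \<theta> \<mu> q \<longleftrightarrow>
     space \<mu> = X \<and> sets \<mu> = metric_borel_sets X \<theta> \<and> emeasure \<mu> X \<noteq> 0 \<and>
     (\<exists>C::real. \<forall>x\<in>X. \<forall>r R. 0 < r \<and> r \<le> R \<longrightarrow>
        emeasure \<mu> (Metric_space.mball X \<theta> x R)
          \<le> ennreal (C * (R / r) powr q) * emeasure \<mu> (Metric_space.mball X \<theta> x r))"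

definition max_separated :: "'a set \<Rightarrow> ('a \<Rightarrow> 'a \<Rightarrow> real) \<Rightarrow> real \<Rightarrow> 'a set \<Rightarrow> bool" where
  "max_separated X d \<epsilon> A \<longleftrightarrow> A \<subseteq> X \<and>
     (\<forall>x\<in>A. \<forall>y\<in>A. x \<noteq> y \<longrightarrow> d x y \<ge> \<epsilon>) \<and>
     (\<forall>z\<in>X - A. \<exists>x\<in>A. d x z < \<epsilon>)"

definition hyp_filling :: "'a set \<Rightarrow> ('a \<Rightarrow> 'a \<Rightarrow> real) \<Rightarrow> real \<Rightarrow> (nat \<Rightarrow> 'a set) \<Rightarrow> bool" where
  "hyp_filling X d a Xs \<longleftrightarrow> incseq Xs \<and> (\<forall>n. max_separated X d (a powi (- int n)) (Xs n))"

definition filling_S :: "(nat \<Rightarrow> 'a set) \<Rightarrow> nat \<Rightarrow> ('a \<times> nat) set" where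
  "filling_S Xs n = {(x, n) | x. x \<in> Xs n}"

definition filling_all :: "(nat \<Rightarrow> 'a set) \<Rightarrow> ('a \<times> nat) set" where
  "filling_all Xs = (\<Union>n. filling_S Xs n)"

definition vball :: "'a set \<Rightarrow> ('a \<Rightarrow> 'a \<Rightarrow> real) \<Rightarrow> real \<Rightarrow> 'a \<times> nat \<Rightarrow> 'a set" where
  "vball X d a v = Metric_space.mball X d (fst v) (a powi (- int (snd v)))"

definition G_adj :: "'a set \<Rightarrow> ('a \<Rightarrow> 'a \<Rightarrow> real) \<Rightarrow> real \<Rightarrow> real \<Rightarrow> (nat \<Rightarrow> 'a set) \<Rightarrow> nat
     \<Rightarrow> 'a \<times> nat \<Rightarrow> 'a \<times> nat \<Rightarrow> bool" where
  "G_adj X d a lam Xs n v w \<longleftrightarrow> v \<in> filling_S Xs n \<and> w \<in> filling_S Xs n \<and> v \<noteq> w \<and>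
     Metric_space.mball X d (fst v) (lam * a powi (- int n)) \<inter>
     Metric_space.mball X d (fst w) (lam * a powi (- int n)) \<noteq> {}"

definition G_path :: "'a set \<Rightarrow> ('a \<Rightarrow> 'a \<Rightarrow> real) \<Rightarrow> real \<Rightarrow> real \<Rightarrow> (nat \<Rightarrow> 'a set) \<Rightarrow> nat
     \<Rightarrow> ('a \<times> nat) list \<Rightarrow> bool" where
  "G_path X d a lam Xs n p \<longleftrightarrow> p \<noteq> [] \<and> set p \<subseteq> filling_S Xs n \<and>
     (\<forall>i. Suc i < length p \<longrightarrow> G_adj X d a lam Xs n (p ! i) (p ! Suc i))"

definition Gamma :: "'a set \<Rightarrow> ('a \<Rightarrow> 'a \<Rightarrow> real) \<Rightarrow> real \<Rightarrow> real \<Rightarrow> (nat \<Rightarrow> 'a set) \<Rightarrow> nat \<Rightarrow> real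
     \<Rightarrow> 'a \<times> nat \<Rightarrow> ('a \<times> nat) list set" where
  "Gamma X d a lam Xs k L v = {p. G_path X d a lam Xs (snd v + k) p \<and>
      fst (hd p) \<in> vball X d a v \<and>
      fst (last p) \<notin> Metric_space.mball X d (fst v) (L * a powi (- int (snd v)))}"

definition rho :: "'a set \<Rightarrow> ('a \<Rightarrow> 'a \<Rightarrow> real) \<Rightarrow> 'a measure \<Rightarrow> real \<Rightarrow> real \<Rightarrow> real \<Rightarrow> (nat \<Rightarrow> 'a set)
     \<Rightarrow> nat \<Rightarrow> real \<Rightarrow> 'a \<times> nat \<Rightarrow> 'a \<times> nat \<Rightarrow> real" where
  "rho X d \<mu> q a lam Xs k L v w =
     (if vball X d a w \<inter> Metric_space.mball X d (fst v) ((L + 1) * a powi (- int (snd v))) \<noteq> {}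
         \<and> (\<exists>\<gamma>\<in>Gamma X d a lam Xs k L v. w \<in> set \<gamma>)
      then (measure \<mu> (vball X d a w) / measure \<mu> (vball X d a v)) powr (1 / q)
      else 0)"

end

theory Submission imports Defs begin

lemma eta_bound:
  fixes \<eta> \<eta>' :: "real \<Rightarrow> real"
  assumes "homeomorphism {0::real..} {0..} \<eta> \<eta>'"
  shows "\<exists>K\<ge>1. \<forall>t\<in>{0..M}. \<eta> t \<le> K"
proof -
  have "continuous_on {0..} \<eta>" using assms by (simp add: homeomorphism_def)
  then have "continuous_on {0..M} \<eta>" by (rule continuous_on_subset) auto
  then have "compact (\<eta> ` {0..M})" by (rule compact_continuous_image) simp
  then have "bounded (\<eta> ` {0..M})" by (rule compact_imp_bounded)
  then obtain B where B: "\<forall>x\<in>\<eta> ` {0..M}. norm x \<le> B" by (auto simp: bounded_iff)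
  show ?thesis
  proof (intro exI[of _ "max 1 B"] conjI ballI)
    fix t assume "t \<in> {0..M}"
    then have "norm (\<eta> t) \<le> B" using B by blast
    then show "\<eta> t \<le> max 1 B" by auto
  qed simp
qed

lemma min_add_le:
  fixes a b :: real
  assumes "0 \<le> a" "0 \<le> b"
  shows "min 1 (a + b) \<le> min 1 a + min 1 b"
  using assms by auto

lemma sum_min_le:
  fixes f :: "'b \<Rightarrow> real"
  assumes "finite A" "\<forall>i\<in>A. 0 \<le> f i"
  shows "min 1 (sum f A) \<le> (\<Sum>i\<in>A. min 1 (f i))"
  using assms
proof (induction A rule: finite_induct)
  case empty then show ?case by simp
next
  case (insert x F)
  have "min 1 (sum f (insert x F)) = min 1 (f x + sum f F)" using insert by simp
  also have "\<dots> \<le> min 1 (f x) + min 1 (sum f F)"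
    by (rule min_add_le) (use insert in \<open>auto intro: sum_nonneg\<close>)
  also have "\<dots> \<le> min 1 (f x) + (\<Sum>i\<in>F. min 1 (f i))" using insert by auto
  also have "\<dots> = (\<Sum>i\<in>insert x F. min 1 (f i))" using insert by simp
  finally show ?case .
qed

lemma chain_le:
  fixes \<theta> :: "'a \<Rightarrow> 'a \<Rightarrow> real" and y :: "nat \<Rightarrow> 'a"
  assumes "Metric_space X \<theta>" "\<forall>i\<le>j. y i \<in> X"
  shows "\<theta> (y 0) (y j) \<le> (\<Sum>i<j. \<theta> (y i) (y (Suc i)))"
  using assms(2)
proof (induction j)
  case 0
  then show ?case using Metric_space.zero[OF assms(1), of "y 0" "y 0"] by simp
next
  case (Suc j)
  have "\<theta> (y 0) (y (Suc j)) \<le> \<theta> (y 0) (y j) + \<theta> (y j) (y (Suc j))"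
    using Metric_space.triangle[OF assms(1)] Suc.prems by simp
  also have "\<dots> \<le> (\<Sum>i<j. \<theta> (y i) (y (Suc i))) + \<theta> (y j) (y (Suc j))"
    using Suc by simp
  finally show ?case by simp
qed

theorem lemma4p5:
  fixes X :: "'a set" and d \<theta> :: "'a \<Rightarrow> 'a \<Rightarrow> real" and \<mu> :: "'a measure"
    and q a L :: real
  assumes "Metric_space X d"
    and "compact_space (Metric_space.mtopology X d)"
    and "mdiam X d = 1 / 2"
    and "a \<ge> 6" and "L > 1"
    and "in_J X d \<theta>"
    and "q > 0" and "q_homogeneous X \<theta> \<mu> q" and "finite_measure \<mu>"
  shows "\<exists>c > 0. \<exists>k0 :: nat. \<forall>lam. 6 \<le> lam \<and> lam \<le> a \<longrightarrow>
           (\<forall>Xs. hyp_filling X d a Xs \<longrightarrow>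
             (\<forall>k \<ge> k0. \<forall>v \<in> filling_all Xs. \<forall>\<gamma> \<in> Gamma X d a lam Xs k L v.
                (\<Sum>w\<leftarrow>\<gamma>. rho X d \<mu> q a lam Xs k L v w) \<ge> c))"
proof -
  interpret D: Metric_space X d by fact
  interpret T: Metric_space X \<theta> using assms(6) unfolding in_J_def by blast
  interpret F: finite_measure \<mu> by fact
  obtain \<eta> \<eta>' where hom: "homeomorphism {0::real..} {0..} \<eta> \<eta>'"
    and qs: "\<forall>x\<in>X. \<forall>b\<in>X. \<forall>c\<in>X. x \<noteq> c \<longrightarrow> \<theta> x b / \<theta> x c \<le> \<eta> (d x b / d x c)"
    using assms(6) unfolding in_J_def by blast
  have Tpos: "\<theta> x z > 0" if "x \<in> X" "z \<in> X" "x \<noteq> z" for x z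
    using that T.zero[of x z] T.nonneg[of x z] by linarith
  have Dpos: "d x z > 0" if "x \<in> X" "z \<in> X" "x \<noteq> z" for x z
    using that D.zero[of x z] D.nonneg[of x z] by linarith
  have Q: "\<theta> x p \<le> K * \<theta> x z"
    if "x\<in>X" "p\<in>X" "z\<in>X" "x\<noteq>z" "d x p / d x z \<le> M" "\<forall>t\<in>{0..M}. \<eta> t \<le> K" for x p z M K
  proof -
    have "\<theta> x p / \<theta> x z \<le> \<eta> (d x p / d x z)" using qs that by blast
    also have "\<dots> \<le> K" using that(5,6) by simp
    finally have "\<theta> x p / \<theta> x z \<le> K" .
    moreover have "\<theta> x z > 0" using Tpos that by blast
    ultimately show ?thesis by (simp add: divide_le_eq)
  qed
  have Kex: "\<exists>K\<ge>1. \<forall>t\<in>{0..M}. \<eta> t \<le> K" for M using eta_bound[OF hom] .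
  have two: "\<exists>p\<in>X. p \<noteq> z" if "z \<in> X" for z
  proof (rule ccontr)
    assume "\<not> ?thesis" then have "\<forall>p\<in>X. p = z" by blast
    then have "{d x y | x y. x \<in> X \<and> y \<in> X} = {d z z}"
    proof (intro equalityI subsetI)
      fix t assume "t \<in> {d x y | x y. x \<in> X \<and> y \<in> X}"
      then obtain x y where "t = d x y" "x \<in> X" "y \<in> X" by blast
      moreover have "x = z" using \<open>x\<in>X\<close> \<open>\<forall>p\<in>X. p = z\<close> by blast
      moreover have "y = z" using \<open>y\<in>X\<close> \<open>\<forall>p\<in>X. p = z\<close> by blast
      ultimately show "t \<in> {d z z}" by simp
    next
      fix t assume "t \<in> {d z z}"
      then show "t \<in> {d x y | x y. x \<in> X \<and> y \<in> X}" using that by blast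
    qed
    then have "{d x y | x y. x \<in> X \<and> y \<in> X} = {0}" using that by simp
    then show False using assms(3) unfolding mdiam_def by simp
  qed
  have dopen: "openin T.mtopology (D.mball y s)" for y s
    unfolding T.openin_mtopology
  proof (intro conjI allI impI)
    show "D.mball y s \<subseteq> X" by auto
    fix z assume z: "z \<in> D.mball y s"
    then have zX: "z\<in>X" "y\<in>X" and dyz: "d y z < s" by auto
    obtain p where p: "p\<in>X" "p\<noteq>z" using two zX by blast
    define e0 where "e0 = s - d y z"
    have e0: "e0 > 0" using dyz e0_def by simp
    obtain K where K: "K \<ge> 1" "\<forall>t\<in>{0..d z p / e0}. \<eta> t \<le> K" using Kex by blast
    have tzp: "\<theta> z p > 0" using p zX Tpos by metis
    show "\<exists>r>0. T.mball z r \<subseteq> D.mball y s"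
    proof (intro exI conjI)
      show "\<theta> z p / K > 0" using tzp K by simp
      show "T.mball z (\<theta> z p / K) \<subseteq> D.mball y s"
      proof
        fix w assume w: "w \<in> T.mball z (\<theta> z p / K)"
        then have wX: "w\<in>X" and tw: "\<theta> z w < \<theta> z p / K" by auto
        have "d z w < e0"
        proof (rule ccontr)
          assume "\<not> d z w < e0" then have ge: "d z w \<ge> e0" by simp
          then have zw: "z \<noteq> w" using e0 zX by auto
          have "d z p / d z w \<le> d z p / e0" using ge e0 by (intro divide_left_mono) auto
          then have "\<theta> z p \<le> K * \<theta> z w" using Q[of z p w "d z p / e0" K] zX wX p zw K by blast
          then show False using tw K by (simp add: field_simps)
        qed
        then show "w \<in> D.mball y s" using D.triangle[of y z w] zX wX e0_def by auto
      qed
    qed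
  qed
  have spX: "space \<mu> = X" and setsmu: "sets \<mu> = metric_borel_sets X \<theta>" and muX: "emeasure \<mu> X \<noteq> 0"
    using assms(8) unfolding q_homogeneous_def by auto
  obtain C where C: "\<forall>x\<in>X. \<forall>r R. 0 < r \<and> r \<le> R \<longrightarrow>
        emeasure \<mu> (T.mball x R) \<le> ennreal (C * (R / r) powr q) * emeasure \<mu> (T.mball x r)"
    using assms(8) unfolding q_homogeneous_def by auto
  have opensets: "U \<in> sets \<mu>" if "openin T.mtopology U" for U
    using that setsmu unfolding metric_borel_sets_def by (auto intro: sigma_sets.Basic)
  have dmeas: "D.mball y s \<in> sets \<mu>" for y s using opensets dopen by blast
  have tmeas: "T.mball y s \<in> sets \<mu>" for y s using opensets by blast
  define C' where "C' = max C 1"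
  have C'pos: "C' > 0" unfolding C'_def by simp
  have hm: "measure \<mu> (T.mball x R) \<le> C' * (R/r) powr q * measure \<mu> (T.mball x r)"
    if "x \<in> X" "0 < r" "r \<le> R" for x r R
  proof (cases "C \<ge> 0")
    case True
    have "ennreal (measure \<mu> (T.mball x R)) \<le> ennreal (C * (R / r) powr q) * ennreal (measure \<mu> (T.mball x r))"
      using C that by (simp add: F.emeasure_eq_measure)
    also have "\<dots> = ennreal (C * (R / r) powr q * measure \<mu> (T.mball x r))"
      using True by (simp add: ennreal_mult)
    finally have "measure \<mu> (T.mball x R) \<le> C * (R / r) powr q * measure \<mu> (T.mball x r)"
      using True by (subst (asm) ennreal_le_iff) auto
    also have "\<dots> \<le> C' * (R / r) powr q * measure \<mu> (T.mball x r)"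
      unfolding C'_def by (intro mult_right_mono) auto
    finally show ?thesis .
  next
    case False
    then have "ennreal (C * (R / r) powr q) = 0"
      using that by (simp add: ennreal_eq_0_iff mult_nonpos_nonneg)
    moreover have "emeasure \<mu> (T.mball x R) \<le> ennreal (C * (R/r) powr q) * emeasure \<mu> (T.mball x r)"
      using C that by blast
    ultimately have "emeasure \<mu> (T.mball x R) = 0" by simp
    then have "measure \<mu> (T.mball x R) = 0" by (simp add: measure_def)
    then show ?thesis using C'pos by simp
  qed
  have pos: "measure \<mu> (T.mball x e) > 0" if "x \<in> X" "e > 0" for x e
  proof (rule ccontr)
    assume "\<not> ?thesis"
    then have z: "measure \<mu> (T.mball x e) = 0" using measure_nonneg[of \<mu>] by (metis less_eq_real_def)
    have "T.mball x (e + real n) \<in> null_sets \<mu>" for n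
    proof -
      have "measure \<mu> (T.mball x (e + real n)) \<le> C' * ((e + real n)/e) powr q * measure \<mu> (T.mball x e)"
        using hm that by simp
      then have "measure \<mu> (T.mball x (e + real n)) = 0" using z measure_nonneg[of \<mu>] by (metis mult_zero_right order_antisym)
      then show ?thesis using tmeas by (simp add: F.emeasure_eq_measure null_sets_def)
    qed
    then have "(\<Union>n. T.mball x (e + real n)) \<in> null_sets \<mu>" by blast
    moreover have "(\<Union>n. T.mball x (e + real n)) = X"
    proof
      show "(\<Union>n. T.mball x (e + real n)) \<subseteq> X" by auto
      show "X \<subseteq> (\<Union>n. T.mball x (e + real n))"
      proof
        fix z assume "z \<in> X"
        obtain n where "\<theta> x z < real n" using reals_Archimedean2 by blast
        then have "z \<in> T.mball x (e + real n)" using \<open>z\<in>X\<close> that by simp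
        then show "z \<in> (\<Union>n. T.mball x (e + real n))" by blast
      qed
    qed
    ultimately show False using muX by (simp add: null_sets_def)
  qed
  define M where "M = max (2*a) (L/(L-1))"
  obtain K where K1: "K \<ge> 1" and Kb: "\<forall>t\<in>{0..M}. \<eta> t \<le> K" using Kex by blast
  define c1 where "c1 = C' powr (-1/q)"
  have c1pos: "c1 > 0" unfolding c1_def using C'pos by simp
  define c where "c = min 1 (c1 / (3*K^3))"
  have cpos: "c > 0" unfolding c_def using c1pos K1 by simp
  show ?thesis
  proof (intro exI[of _ c] conjI exI[of _ "0::nat"] allI impI ballI)
    show "c > 0" by (fact cpos)
    fix lam Xs k v \<gamma>
    assume lam: "6 \<le> lam \<and> lam \<le> a" and hf: "hyp_filling X d a Xs" and "0 \<le> k"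
      and vS: "v \<in> filling_all Xs" and gG: "\<gamma> \<in> Gamma X d a lam Xs k L v"
    show "(\<Sum>w\<leftarrow>\<gamma>. rho X d \<mu> q a lam Xs k L v w) \<ge> c"
    proof -
    define n where "n = snd v + k"
    define x0 where "x0 = fst v"
    define r where "r = a powi (- int (snd v))"
    define s where "s = a powi (- int n)"
    define len where "len = length \<gamma>"
    define y where "y i = fst (\<gamma> ! i)" for i
    define f where "f w = rho X d \<mu> q a lam Xs k L v w" for w
    have apos: "a > 0" using assms(4) by simp
    have rpos: "r > 0" and spos: "s > 0" unfolding r_def s_def using apos by simp_all
    have Lr: "r < L * r" using rpos assms(5) by simp
    have XsX: "Xs m \<subseteq> X" for m using hf unfolding hyp_filling_def max_separated_def by blast
    have x0X: "x0 \<in> X"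
    proof -
      obtain m where "v \<in> filling_S Xs m" using vS unfolding filling_all_def by blast
      then have "x0 \<in> Xs m" unfolding filling_S_def x0_def by auto
      then show ?thesis using XsX by blast
    qed
    have path: "\<gamma> \<noteq> []" "set \<gamma> \<subseteq> filling_S Xs n"
        "\<forall>i. Suc i < len \<longrightarrow> G_adj X d a lam Xs n (\<gamma>!i) (\<gamma>!Suc i)"
      and hd: "fst (hd \<gamma>) \<in> vball X d a v" and lst: "fst (last \<gamma>) \<notin> D.mball x0 (L*r)"
      using gG unfolding Gamma_def G_path_def n_def len_def x0_def r_def by auto
    have lenpos: "len > 0" using path(1) len_def by simp
    have mem: "\<gamma>!i \<in> filling_S Xs n" if "i < len" for i using path(2) that len_def nth_mem by blast
    have sndn: "snd (\<gamma>!i) = n" and yXs: "y i \<in> Xs n" if "i<len" for i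
      using mem[OF that] unfolding y_def filling_S_def by auto
    have yX: "y i \<in> X" if "i<len" for i
      using yXs[OF that] XsX by blast
    have y0: "d x0 (y 0) < r" using hd path(1) unfolding vball_def y_def x0_def r_def by (simp add: hd_conv_nth)
    have ylast: "\<not> d x0 (y (len - 1)) < L*r" using lst path(1) x0X yX[of "len-1"] lenpos
      unfolding y_def len_def by (simp add: last_conv_nth)
    have step: "y i \<noteq> y (Suc i) \<and> d (y i) (y (Suc i)) < 2 * lam * s" if "Suc i < len" for i
    proof -
      have adj: "G_adj X d a lam Xs n (\<gamma>!i) (\<gamma>!Suc i)" using path(3) that by blast
      then have ne: "\<gamma>!i \<noteq> \<gamma>!Suc i"
        and "D.mball (y i) (lam * s) \<inter> D.mball (y (Suc i)) (lam * s) \<noteq> {}"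
        unfolding G_adj_def y_def s_def by auto
      then obtain z where z: "z \<in> X" "d (y i) z < lam * s" "d (y (Suc i)) z < lam * s" by auto
      have "d (y i) (y (Suc i)) \<le> d (y i) z + d z (y (Suc i))"
        using D.triangle yX that z by simp
      moreover have "d z (y (Suc i)) = d (y (Suc i)) z" by (rule D.commute)
      ultimately have "d (y i) (y (Suc i)) < 2 * lam * s" using z by linarith
      moreover have "y i \<noteq> y (Suc i)" using ne sndn[of i] sndn[of "Suc i"] that
        unfolding y_def by (auto simp: prod_eq_iff)
      ultimately show ?thesis by simp
    qed
    define P where "P j \<longleftrightarrow> j < len \<and> L*r \<le> d x0 (y j)" for j
    define j where "j = (LEAST j. P j)"
    have jex: "P (len - 1)" using lenpos ylast unfolding P_def by simp
    have j: "j < len" "L*r \<le> d x0 (y j)" using LeastI[of P, OF jex] unfolding j_def P_def by auto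
    have before: "d x0 (y i) < L*r" if "i < j" for i
    proof -
      have "\<not> P i" using not_less_Least[of i P] that unfolding j_def by blast
      then show ?thesis using that j unfolding P_def by auto
    qed
    have jpos: "j > 0" using j y0 Lr by (cases j) auto
    have yjX: "y j \<in> X" using yX j by simp
    define \<Theta> where "\<Theta> = \<theta> x0 (y j)"
    have x0yj: "x0 \<noteq> y j"
    proof
      assume "x0 = y j"
      then have "d x0 (y j) = 0" using x0X by simp
      then show False using j(2) Lr rpos by linarith
    qed
    have \<Theta>pos: "\<Theta> > 0" unfolding \<Theta>_def using Tpos x0X yjX x0yj by blast
    have y0X: "y 0 \<in> X" using yX lenpos by simp
    have y0yj: "y 0 \<noteq> y j" using y0 j Lr by auto
    have Mge: "M \<ge> 2*a" "M \<ge> L/(L-1)" unfolding M_def by auto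
    have ratio: "d (y j) x0 / d (y j) (y 0) \<le> M"
    proof -
      have tri: "d (y j) x0 \<le> d (y j) (y 0) + d (y 0) x0" using D.triangle y0X yjX x0X by blast
      have "d (y 0) x0 = d x0 (y 0)" by (rule D.commute)
      have c0: "d (y j) x0 = d x0 (y j)" by (rule D.commute)
      have e: "d (y j) (y 0) > 0" using Dpos yjX y0X y0yj by metis
      have e_ge: "d (y j) (y 0) \<ge> d x0 (y j) - r"
        using tri \<open>d (y 0) x0 = d x0 (y 0)\<close> y0 c0 by linarith
      have m1: "L * d (y j) (y 0) \<ge> L * (d x0 (y j) - r)"
        by (rule mult_left_mono[OF e_ge]) (use assms(5) in simp)
      have "d x0 (y j) * (L-1) = L * d x0 (y j) - d x0 (y j)" by (simp add: algebra_simps)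
      also have "\<dots> \<le> L * d x0 (y j) - L*r" using j(2) by simp
      also have "\<dots> = L * (d x0 (y j) - r)" by (simp add: algebra_simps)
      also have "\<dots> \<le> L * d (y j) (y 0)" by (fact m1)
      finally have "d x0 (y j) * (L - 1) \<le> L * d (y j) (y 0)" .
      then have "d (y j) x0 * (L - 1) \<le> L * d (y j) (y 0)" using c0 by simp
      then have "d (y j) x0 / d (y j) (y 0) \<le> L/(L-1)" using e assms(5)
        by (simp add: divide_le_eq le_divide_eq mult.commute)
      then show ?thesis using Mge by linarith
    qed
    have "\<theta> (y j) x0 \<le> K * \<theta> (y j) (y 0)"
      by (rule Q[of "y j" x0 "y 0" M K]) (use yjX x0X y0X y0yj ratio Kb in auto)
    then have \<Theta>le: "\<Theta> \<le> K * \<theta> (y 0) (y j)"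
      unfolding \<Theta>_def using T.commute[of x0 "y j"] T.commute[of "y 0" "y j"] by simp
    have chain: "\<theta> (y 0) (y j) \<le> (\<Sum>i<j. \<theta> (y i) (y (Suc i)))"
      by (rule chain_le[OF T.Metric_space_axioms]) (use yX j in auto)
    have Vpos: "measure \<mu> (D.mball x0 r) > 0"
    proof -
      have "x0 \<in> D.mball x0 r" using x0X rpos by simp
      then obtain e where e: "e > 0" "T.mball x0 e \<subseteq> D.mball x0 r"
        using dopen[of x0 r] unfolding T.openin_mtopology by blast
      have "measure \<mu> (T.mball x0 e) \<le> measure \<mu> (D.mball x0 r)"
        by (rule F.finite_measure_mono[OF e(2) dmeas])
      moreover have "measure \<mu> (T.mball x0 e) > 0" using pos x0X e by blast
      ultimately show ?thesis by linarith
    qed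
    have termb: "f (\<gamma>!i) \<ge> min 1 (c1 * \<theta> (y i) (y (Suc i)) / (3*K^2*\<Theta>))" if "i < j" for i
    proof -
      have il: "i < len" "Suc i < len" using that j by auto
      have yi: "y i \<in> X" "y (Suc i) \<in> X" using yX il by auto
      have st: "y i \<noteq> y (Suc i)" "d (y i) (y (Suc i)) < 2 * lam * s" using step il by auto
      define Ti where "Ti = \<theta> (y i) (y (Suc i))"
      have Tipos: "Ti > 0" unfolding Ti_def using Tpos yi st by blast
      define R where "R = 3*K*\<Theta>"
      have Rpos: "R > 0" unfolding R_def using K1 \<Theta>pos by simp
      have vw: "vball X d a (\<gamma>!i) = D.mball (y i) s"
        unfolding vball_def y_def s_def using sndn[OF il(1)] by simp
      have vv: "vball X d a v = D.mball x0 r" unfolding vball_def x0_def r_def by simp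
      have yin: "y i \<in> D.mball (y i) s \<inter> D.mball x0 ((L+1)*r)"
        using yi x0X spos before[OF that] rpos by (simp add: algebra_simps)
      have cond: "vball X d a (\<gamma>!i) \<inter> Metric_space.mball X d (fst v) ((L + 1) * a powi (- int (snd v))) \<noteq> {}
         \<and> (\<exists>\<gamma>'\<in>Gamma X d a lam Xs k L v. \<gamma>!i \<in> set \<gamma>')"
      proof
        have "vball X d a (\<gamma>!i) \<inter> D.mball x0 ((L+1)*r) \<noteq> {}" using yin vw by blast
        then show "vball X d a (\<gamma>!i) \<inter> Metric_space.mball X d (fst v) ((L + 1) * a powi (- int (snd v))) \<noteq> {}"
          unfolding x0_def r_def .
        show "\<exists>\<gamma>'\<in>Gamma X d a lam Xs k L v. \<gamma>!i \<in> set \<gamma>'"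
          using gG il(1) unfolding len_def by (intro bexI[of _ \<gamma>]) auto
      qed
      have rho_eq: "f (\<gamma>!i) = (measure \<mu> (D.mball (y i) s) / measure \<mu> (D.mball x0 r)) powr (1/q)"
        unfolding f_def rho_def using cond vw vv by simp
      define A where "A = measure \<mu> (D.mball (y i) s)"
      define V where "V = measure \<mu> (D.mball x0 r)"
      have incl1: "T.mball (y i) (Ti/K) \<subseteq> D.mball (y i) s"
      proof
        fix z assume z: "z \<in> T.mball (y i) (Ti/K)"
        then have zX: "z \<in> X" and tz: "\<theta> (y i) z < Ti/K" by auto
        have "d (y i) z < s"
        proof (rule ccontr)
          assume "\<not> d (y i) z < s"
          then have ge: "d (y i) z \<ge> s" by simp
          then have ne: "y i \<noteq> z" using spos yi by auto
          have dpos: "d (y i) z > 0" using ge spos by linarith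
          have "d (y i) (y (Suc i)) < 2 * a * s" using st lam spos by (smt (verit) mult_right_mono)
          also have "\<dots> \<le> 2 * a * d (y i) z" using ge apos by simp
          finally have "d (y i) (y (Suc i)) / d (y i) z \<le> 2 * a" using dpos by (simp add: divide_le_eq)
          then have "d (y i) (y (Suc i)) / d (y i) z \<le> M" using Mge by linarith
          then have "Ti \<le> K * \<theta> (y i) z" unfolding Ti_def using Q[of "y i" "y (Suc i)" z M K] yi zX ne Kb by blast
          then show False using tz K1 by (simp add: field_simps)
        qed
        then show "z \<in> D.mball (y i) s" using zX yi by simp
      qed
      have incl2: "D.mball x0 r \<subseteq> T.mball (y i) R"
      proof
        fix z assume z: "z \<in> D.mball x0 r"
        then have zX: "z \<in> X" and dz: "d x0 z < r" by auto
        have dj: "d x0 (y j) > 0" using j(2) Lr rpos by linarith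
        have M1: "M \<ge> 1" using Mge assms(4) by linarith
        have "d x0 z / d x0 (y j) \<le> 1" using dz j(2) Lr dj
          by (simp add: divide_le_eq)
        then have "d x0 z / d x0 (y j) \<le> M" using M1 by linarith
        then have t1: "\<theta> x0 z \<le> K * \<Theta>" unfolding \<Theta>_def using Q[of x0 z "y j" M K] x0X zX yjX x0yj Kb by blast
        have "d x0 (y i) / d x0 (y j) \<le> 1" using before[OF that] j(2) dj
          by (simp add: divide_le_eq)
        then have "d x0 (y i) / d x0 (y j) \<le> M" using M1 by linarith
        then have t2: "\<theta> x0 (y i) \<le> K * \<Theta>" unfolding \<Theta>_def using Q[of x0 "y i" "y j" M K] x0X yi yjX x0yj Kb by blast
        have "\<theta> (y i) z \<le> \<theta> (y i) x0 + \<theta> x0 z" using T.triangle yi x0X zX by blast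
        also have "\<dots> = \<theta> x0 (y i) + \<theta> x0 z" using T.commute by simp
        also have "\<dots> \<le> 2 * K * \<Theta>" using t1 t2 by simp
        also have "\<dots> < R" unfolding R_def using K1 \<Theta>pos by simp
        finally show "z \<in> T.mball (y i) R" using zX yi by simp
      qed
      have mono: "measure \<mu> U \<le> measure \<mu> W" if "U \<subseteq> W" "W \<in> sets \<mu>" for U W
        using F.finite_measure_mono that by blast
      have Vpos': "V > 0" using Vpos V_def by simp
      show ?thesis
      proof (cases "Ti/K \<ge> R")
        case True
        have "T.mball (y i) R \<subseteq> T.mball (y i) (Ti/K)" using True by (auto simp del: T.in_mball simp add: T.in_mball)
        then have "D.mball x0 r \<subseteq> D.mball (y i) s" using incl1 incl2 by blast
        then have "V \<le> A" unfolding A_def V_def using mono dmeas by blast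
        then have "A / V \<ge> 1" using Vpos' by simp
        then have "(A/V) powr (1/q) \<ge> 1" using assms(7) by (intro ge_one_powr_ge_zero) auto
        then show ?thesis using rho_eq A_def V_def by simp
      next
        case False
        define \<rho> where "\<rho> = Ti / K"
        have rhopos: "\<rho> > 0" unfolding \<rho>_def using Tipos K1 by simp
        define PP where "PP = (R/\<rho>) powr q"
        have PPpos: "PP > 0" unfolding PP_def using Rpos rhopos by simp
        have "V \<le> measure \<mu> (T.mball (y i) R)" unfolding V_def using mono incl2 tmeas by blast
        also have "\<dots> \<le> C' * PP * measure \<mu> (T.mball (y i) \<rho>)"
          unfolding PP_def using hm[of "y i" \<rho> R] yi rhopos False \<rho>_def by simp
        also have "\<dots> \<le> C' * PP * A" unfolding A_def \<rho>_def
          using mono[OF incl1 dmeas] C'pos PPpos by (intro mult_left_mono) auto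
        finally have VA: "V \<le> C' * PP * A" .
        have "1 / (C' * PP) \<le> A / V" using VA Vpos' C'pos PPpos
          by (simp add: divide_simps mult.commute)
        then have "(1 / (C' * PP)) powr (1/q) \<le> (A/V) powr (1/q)"
          using C'pos PPpos assms(7) by (intro powr_mono2) auto
        moreover have "(1 / (C' * PP)) powr (1/q) = c1 * (\<rho> / R)"
        proof -
          have "(1 / (C' * PP)) powr (1/q) = 1 / (C' powr (1/q) * PP powr (1/q))"
            using C'pos PPpos by (simp add: powr_divide powr_mult)
          also have "PP powr (1/q) = R / \<rho>" unfolding PP_def using Rpos rhopos assms(7)
            by (simp add: powr_powr)
          also have "1 / (C' powr (1/q) * (R / \<rho>)) = c1 * (\<rho> / R)"
            unfolding c1_def using C'pos Rpos rhopos by (simp add: powr_minus_divide field_simps)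
          finally show ?thesis .
        qed
        moreover have "c1 * (\<rho> / R) = c1 * \<theta> (y i) (y (Suc i)) / (3*K^2*\<Theta>)"
          unfolding \<rho>_def R_def Ti_def using K1 \<Theta>pos by (simp add: field_simps power2_eq_square)
        ultimately show ?thesis using rho_eq A_def V_def by simp
      qed
    qed
    have fnn: "f w \<ge> 0" for w unfolding f_def rho_def by simp
    define g where "g i = c1 * \<theta> (y i) (y (Suc i)) / (3*K^2*\<Theta>)" for i
    have "(\<Sum>w\<leftarrow>\<gamma>. rho X d \<mu> q a lam Xs k L v w) = (\<Sum>i<len. f (\<gamma>!i))"
      unfolding f_def len_def by (subst sum_list_sum_nth) (simp add: atLeast0LessThan)
    also have "\<dots> \<ge> (\<Sum>i<j. f (\<gamma>!i))"
      using j fnn by (intro sum_mono2) auto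
    finally have S0: "(\<Sum>w\<leftarrow>\<gamma>. rho X d \<mu> q a lam Xs k L v w) \<ge> (\<Sum>i<j. f (\<gamma>!i))" .
    have S1: "(\<Sum>i<j. f (\<gamma>!i)) \<ge> (\<Sum>i<j. min 1 (g i))"
      using termb unfolding g_def by (intro sum_mono) auto
    have S2: "(\<Sum>i<j. min 1 (g i)) \<ge> min 1 (\<Sum>i<j. g i)"
      using c1pos \<Theta>pos K1 Tpos unfolding g_def by (intro sum_min_le) auto
    have "(\<Sum>i<j. g i) = c1 / (3*K^2*\<Theta>) * (\<Sum>i<j. \<theta> (y i) (y (Suc i)))"
      unfolding g_def by (simp add: sum_distrib_left sum_divide_distrib)
    also have "c1 / (3*K^2*\<Theta>) * (\<Sum>i<j. \<theta> (y i) (y (Suc i))) \<ge> c1 / (3*K^2*\<Theta>) * (\<Theta> / K)"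
    proof (rule mult_left_mono)
      have "\<Theta> \<le> K * (\<Sum>i<j. \<theta> (y i) (y (Suc i)))"
        using \<Theta>le chain K1 by (meson mult_left_mono order_trans zero_le_one le_less_trans less_le_trans order.strict_implies_order less_le)
      then show "\<Theta> / K \<le> (\<Sum>i<j. \<theta> (y i) (y (Suc i)))"
        using K1 by (simp add: divide_le_eq mult.commute)
      show "0 \<le> c1 / (3*K^2*\<Theta>)" using c1pos K1 \<Theta>pos by simp
    qed
    also have "c1 / (3*K^2*\<Theta>) * (\<Theta> / K) = c1 / (3*K^3)"
      using \<Theta>pos K1 by (simp add: field_simps power2_eq_square power3_eq_cube)
    finally have S3: "(\<Sum>i<j. g i) \<ge> c1 / (3*K^3)" .
    have "c \<le> min 1 (\<Sum>i<j. g i)" unfolding c_def using S3 by (simp add: min.coboundedI2 min_def)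
    then show ?thesis using S0 S1 S2 by linarith
    qed
  qed
qed

end
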